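(* Let $q \ge 5$ be a prime number, $s \in \mathbb Z_q^* \setminus \{1\}$ and $2 \le k \le q-1$. Let $\mathcal A = \{1,2,\dots,k-1\}$ and $\mathcal B = \{k,k+1,\dots,q-1\}$, regarded as sets of residue classes modulo $q$. Then neither $\mathcal A$ nor $\mathcal B$ is invariant under multiplication by $s$ (i.e. $s\mathcal A \neq \mathcal A$ and $s\mathcal B \neq \mathcal B$ in $\mathbb Z_q$). *)

theory Defs
  imports "HOL-Computational_Algebra.Primes"
begin

(* Residues mod q represented by their least nonnegative representatives 0..q-1.
   Multiplication of a set of residues by s modulo q. *)
definition mult_set_mod :: "nat \<Rightarrow> nat \<Rightarrow> nat set \<Rightarrow> nat set" where
  "mult_set_mod q s A = (\<lambda>a. (s * a) mod q) ` A"

end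

theory Submission
  imports Defs "HOL-Number_Theory.Cong"
begin

lemma inj_mult_mod:
  fixes q s :: nat
  assumes "prime q" "s \<in> {1..<q}"
  shows "inj_on (\<lambda>a. (s * a) mod q) {1..q-1}"
proof (rule inj_onI)
  fix a b assume a: "a \<in> {1..q-1}" and b: "b \<in> {1..q-1}" and e: "(s * a) mod q = (s * b) mod q"
  have cop: "coprime s q"
  proof -
    have "\<not> q dvd s" using assms(2) by (auto dest: dvd_imp_le)
    then show ?thesis using assms(1) by (simp add: prime_imp_coprime_nat coprime_commute)
  qed
  have "[s * a = s * b] (mod q)" using e by (simp add: cong_def)
  then have "[a = b] (mod q)" using cop by (simp add: cong_mult_lcancel_nat)
  then show "a = b" using a b by (auto simp: cong_def)
qed

lemma mainL:
  fixes q s m :: nat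
  assumes q: "prime q" and s: "s \<in> {1..<q}" "s \<noteq> 1" and m: "1 \<le> m" "m + 2 \<le> q"
    and sub: "mult_set_mod q s {1..m} \<subseteq> {1..m}"
  shows False
proof -
  have inj: "inj_on (\<lambda>a. (s * a) mod q) {1..m}"
    by (rule inj_on_subset[OF inj_mult_mod[OF q s(1)]]) (use m in auto)
  have eq: "mult_set_mod q s {1..m} = {1..m}"
  proof -
    have "card ((\<lambda>a. (s * a) mod q) ` {1..m}) = card {1..m}" using inj by (rule card_image)
    then show ?thesis using sub unfolding mult_set_mod_def
      by (intro card_subset_eq) auto
  qed
  have "1 \<in> {1..m}" using m by simp
  then have "(s*1) mod q \<in> mult_set_mod q s {1..m}" unfolding mult_set_mod_def by (rule imageI)
  then have "(s*1) mod q \<in> {1..m}" using eq by simp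
  then have sm: "s \<le> m" using s by simp
  have "s + m < q"
  proof (rule ccontr)
    assume "\<not> s + m < q"
    then have "q - s \<in> {1..m}" using s by auto
    then have "q - s \<in> (\<lambda>a. (s * a) mod q) ` {1..m}" using eq unfolding mult_set_mod_def by simp
    then obtain a where a: "a \<in> {1..m}" "(s*a) mod q = q - s" by (elim imageE) simp
    have "(s*(a+1)) mod q = (s*a + s) mod q" by (simp add: algebra_simps)
    also have "\<dots> = ((s*a) mod q + s) mod q" by (rule mod_add_left_eq[symmetric])
    also have "\<dots> = q mod q" using a s by simp
    finally have "q dvd s*(a+1)" by (simp add: mod_eq_0_iff_dvd)
    then have "q dvd s \<or> q dvd a+1" using q prime_dvd_mult_iff by blast
    moreover have "\<not> q dvd s" using s by (auto dest: dvd_imp_le)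
    moreover have "\<not> q dvd a+1" using a m by (auto dest: dvd_imp_le)
    ultimately show False by blast
  qed
  define t where "t = m div s + 1"
  have "m div s < m" using sm s m by (intro div_less_dividend) auto
  then have tA: "t \<in> {1..m}" unfolding t_def by auto
  have st1: "m < s * t"
  proof -
    have "s * (m div s) + m mod s = m" by (rule mult_div_mod_eq)
    moreover have "m mod s < s" using s by simp
    moreover have "s * t = s * (m div s) + s" unfolding t_def by (simp add: algebra_simps)
    ultimately show ?thesis by linarith
  qed
  have "s * t \<le> m + s"
  proof -
    have "s * (m div s) + m mod s = m" by (rule mult_div_mod_eq)
    moreover have "s * t = s * (m div s) + s" unfolding t_def by (simp add: algebra_simps)
    ultimately show ?thesis by linarith
  qed
  with \<open>s + m < q\<close> have "s * t < q" by linarith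
  then have "(s*t) mod q = s * t" by simp
  moreover have "(s*t) mod q \<in> {1..m}"
  proof -
    have "(s*t) mod q \<in> mult_set_mod q s {1..m}" unfolding mult_set_mod_def using tA by (rule imageI)
    then show ?thesis using eq by simp
  qed
  ultimately show False using st1 by simp
qed

theorem lemma3:
  fixes q s k :: nat
  assumes "prime q" and "q \<ge> 5"
    and "s \<in> {1..<q}" and "s \<noteq> 1"
    and "2 \<le> k" and "k \<le> q - 1"
  shows "mult_set_mod q s {1..k-1} \<noteq> {1..k-1} \<and> mult_set_mod q s {k..q-1} \<noteq> {k..q-1}"
proof
  show "mult_set_mod q s {1..k-1} \<noteq> {1..k-1}"
  proof
    assume e: "mult_set_mod q s {1..k-1} = {1..k-1}"
    have "1 \<le> k-1" "k-1+2 \<le> q" using assms by auto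
    from mainL[OF assms(1,3,4) this] e show False by simp
  qed
  show "mult_set_mod q s {k..q-1} \<noteq> {k..q-1}"
  proof
    assume B: "mult_set_mod q s {k..q-1} = {k..q-1}"
    have "mult_set_mod q s {1..q-k} \<subseteq> {1..q-k}"
    proof
      fix w assume "w \<in> mult_set_mod q s {1..q-k}"
      then obtain y where y: "y \<in> {1..q-k}" "w = (s*y) mod q" unfolding mult_set_mod_def by auto
      have "(s*(q-y)) mod q \<in> {k..q-1}" using B y unfolding mult_set_mod_def by force
      then obtain z where z: "z \<in> {k..q-1}" "(s*(q-y)) mod q = z" by blast
      have "(s*y + s*(q-y)) = s * q" proof -
        have "y \<le> q" using y by auto
        then have "s*y \<le> s*q" by simp
        then show ?thesis by (simp add: diff_mult_distrib2)
      qed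
      then have "(s*y + s*(q-y)) mod q = 0" by simp
      moreover have "(s*y mod q + s*(q-y) mod q) mod q = (s*y + s*(q-y)) mod q" by (rule mod_add_eq)
      ultimately have m0: "(s*y mod q + z) mod q = 0" using z(2) by simp
      have "s*y mod q < q" "z < q" "0 < z" using z assms by auto
      have "s*y mod q + z = q"
      proof -
        have "q dvd (s*y mod q + z)" using m0 by auto
        moreover have "s*y mod q + z < 2*q" "0 < s*y mod q + z" using \<open>s*y mod q < q\<close> \<open>z<q\<close> \<open>0<z\<close> by linarith+
        ultimately have lt: "s*y mod q + z < q*2" "0 < s*y mod q + z" by simp_all
        obtain c where c0: "s*y mod q + z = q * c" using \<open>q dvd (s*y mod q + z)\<close> unfolding dvd_def by blast
        have c: "s*y mod q + z = q * c" "q*c < q*2" "0 < q*c" using c0 lt by simp_all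
        have "c < 2" using c(2) by simp
        have "0 < c" using c(3) by (cases c) auto
        have "c = 1" using \<open>c<2\<close> \<open>0<c\<close> by linarith
        then show ?thesis using c by simp
      qed
      then show "w \<in> {1..q-k}" using y z by auto
    qed
    moreover have "1 \<le> q-k" "q-k+2 \<le> q" using assms by auto
    ultimately show False using mainL[OF assms(1,3,4)] by blast
  qed
qed

end
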